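(* Let $n\ge 6$, $4\le p\le n-1$, and let $K_{n+1}=(V,E)$ be the complete graph on $V=\{0,\dots,n\}$. If $c\in\mathbb{R}^E$ and $c_0\in\mathbb{R}$ are such that $c^\top y=c_0$ for the incidence vector $y$ of every $[0,n]$-$p$-path, then there are $\alpha,\beta,\gamma\in\mathbb{R}$ with $c_{0i}=\alpha$ and $c_{in}=\beta$ for all $i\in\{1,\dots,n-1\}$, and $c_{ij}=\gamma$ for all distinct $i,j\in\{1,\dots,n-1\}$.
   Context: For an undirected graph $G=(V,E)$ with $V=\{0,\dots,n\}$, a $[0,n]$-$p$-path is a simple (undirected) path from $0$ to $n$ with exactly $p$ edges. $c_{ij}$ denotes the entry of $c$ for the edge $[i,j]$. *)

theory Defs
  imports Complex_Main
begin

definition Kedges :: "nat \<Rightarrow> nat set set" where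
  "Kedges n = {{i, j} | i j. i \<le> n \<and> j \<le> n \<and> i \<noteq> j}"

definition is_0n_p_path :: "nat \<Rightarrow> nat \<Rightarrow> nat list \<Rightarrow> bool" where
  "is_0n_p_path n p vs \<longleftrightarrow> distinct vs \<and> length vs = p + 1 \<and> hd vs = 0 \<and> last vs = n
     \<and> set vs \<subseteq> {0..n}"

definition path_edges :: "nat list \<Rightarrow> nat set set" where
  "path_edges vs = {{vs ! k, vs ! (k + 1)} | k. k + 1 < length vs}"

definition incidence :: "nat list \<Rightarrow> nat set \<Rightarrow> real" where
  "incidence vs e = (if e \<in> path_edges vs then 1 else 0)"

end

theory Submission
  imports Defs
begin

fun pc :: "(nat set \<Rightarrow> real) \<Rightarrow> nat list \<Rightarrow> real" where
  "pc c (x # y # xs) = c {x, y} + pc c (y # xs)"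
| "pc c _ = 0"

lemma pc_append: "pc c (xs @ y # ys) = pc c (xs @ [y]) + pc c (y # ys)"
proof (induction xs)
  case Nil then show ?case by simp
next
  case (Cons a xs)
  then show ?case by (cases xs) auto
qed

lemma pe_nil: "path_edges [] = {}" and pe_single: "path_edges [x] = {}"
  by (auto simp: path_edges_def)

lemma pe_cons: "path_edges (x # y # xs) = insert {x, y} (path_edges (y # xs))"
proof -
  have "path_edges (x # y # xs) = {{(x#y#xs) ! k, (x#y#xs) ! (k + 1)} | k. k + 1 < length (x#y#xs)}"
    by (simp add: path_edges_def)
  also have "\<dots> = insert {x,y} {{(y#xs) ! k, (y#xs) ! (k + 1)} | k. k + 1 < length (y#xs)}"
    apply (rule set_eqI; rule iffI)
     apply (clarsimp)
    subgoal for k by (cases k) auto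
    apply clarsimp
    apply (erule disjE)
     apply (rule exI[of _ 0]; simp)
    apply clarsimp
    subgoal for k by (rule exI[of _ "Suc k"]) simp
    done
  finally show ?thesis by (simp add: path_edges_def)
qed

lemma pe_sub: "e \<in> path_edges vs \<Longrightarrow> e \<subseteq> set vs"
  by (auto simp: path_edges_def)

lemma pe_fin: "finite (path_edges vs)"
proof -
  have "path_edges vs = (\<lambda>k. {vs ! k, vs ! (k + 1)}) ` {k. k + 1 < length vs}"
    by (auto simp: path_edges_def)
  moreover have "finite {k. k + 1 < length vs}" by (rule finite_subset[of _ "{..<length vs}"]) auto
  ultimately show ?thesis by simp
qed

lemma sum_pe: "distinct vs \<Longrightarrow> (\<Sum>e\<in>path_edges vs. c e) = pc c vs"
proof (induction vs)
  case (Cons x xs)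
  show ?case
  proof (cases xs)
    case (Cons y ys)
    have "{x,y} \<notin> path_edges (y # ys)"
      using Cons.prems pe_sub[of "{x,y}" "y#ys"] \<open>xs = y # ys\<close> by auto
    then show ?thesis using Cons.IH Cons.prems \<open>xs = y # ys\<close> by (simp add: pe_cons pe_fin)
  qed (simp add: pe_single)
qed (simp add: pe_nil)

lemma pe_K: "distinct vs \<Longrightarrow> set vs \<subseteq> {0..n} \<Longrightarrow> path_edges vs \<subseteq> Kedges n"
proof
  fix e assume H: "distinct vs" "set vs \<subseteq> {0..n}" and e: "e \<in> path_edges vs"
  then obtain k where k: "e = {vs ! k, vs ! (k+1)}" "k + 1 < length vs" by (auto simp: path_edges_def)
  have "vs ! k \<in> set vs" "vs ! Suc k \<in> set vs" using k(2) by auto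
  then have "vs ! k \<le> n" "vs ! Suc k \<le> n" using H(2) by auto
  moreover have "vs ! k \<noteq> vs ! Suc k" using H k nth_eq_iff_index_eq[of vs k "Suc k"] by auto
  ultimately show "e \<in> Kedges n" using k unfolding Kedges_def by auto
qed

lemma Kfin: "finite (Kedges n)"
proof -
  have "Kedges n \<subseteq> Pow {0..n}" by (auto simp: Kedges_def)
  then show ?thesis by (rule finite_subset) simp
qed

lemma cost_pc:
  assumes "is_0n_p_path n p vs"
  shows "(\<Sum>e\<in>Kedges n. c e * incidence vs e) = pc c vs"
proof -
  have d: "distinct vs" and s: "set vs \<subseteq> {0..n}" using assms by (auto simp: is_0n_p_path_def)
  have "(\<Sum>e\<in>Kedges n. c e * incidence vs e) = (\<Sum>e\<in>Kedges n. if e \<in> path_edges vs then c e else 0)"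
    by (rule sum.cong) (auto simp: incidence_def)
  also have "\<dots> = (\<Sum>e\<in>Kedges n \<inter> path_edges vs. c e)"
    by (simp add: sum.inter_restrict[OF Kfin])
  also have "Kedges n \<inter> path_edges vs = path_edges vs" using pe_K[OF d s] by blast
  finally show ?thesis using sum_pe[OF d] by simp
qed

lemma filler:
  assumes "finite A" "k + card A \<le> n - 1"
  shows "\<exists>F. distinct F \<and> length F = k \<and> set F \<subseteq> {1..n-1} - A"
proof -
  have "card {1..n-1} - card A \<le> card ({1..n-1} - A)"
    using diff_card_le_card_Diff[OF assms(1)] .
  then have "k \<le> card ({1..n-1} - A)" using assms(2) by simp
  then obtain T where T: "T \<subseteq> {1..n-1} - A" "card T = k" "finite T"
    by (rule obtain_subset_with_card_n)
  show ?thesis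
    by (rule exI[of _ "sorted_list_of_set T"]) (use T in auto)
qed

theorem lemmaU1:
  fixes n p :: nat and c :: "nat set \<Rightarrow> real" and c0 :: real
  assumes "n \<ge> 6" and "4 \<le> p" and "p \<le> n - 1"
    and "\<forall>vs. is_0n_p_path n p vs \<longrightarrow> (\<Sum>e\<in>Kedges n. c e * incidence vs e) = c0"
  shows "\<exists>\<alpha> \<beta> \<gamma>. (\<forall>i\<in>{1..n-1}. c {0, i} = \<alpha> \<and> c {i, n} = \<beta>)
           \<and> (\<forall>i\<in>{1..n-1}. \<forall>j\<in>{1..n-1}. i \<noteq> j \<longrightarrow> c {i, j} = \<gamma>)"
proof -
  have P: "pc c vs = c0" if "is_0n_p_path n p vs" for vs
    using assms(4) cost_pc[OF that] that by metis
  let ?I = "{1..n-1}"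
  have A: "c {0,a} + c {b,s} = c {0,b} + c {a,s}"
    if "a \<in> ?I" "b \<in> ?I" "s \<in> ?I" "a \<noteq> b" "a \<noteq> s" "b \<noteq> s" for a b s
  proof -
    have cd: "card {a,b,s} = 3" using that by simp
    obtain F where F: "distinct F" "length F = p - 4" "set F \<subseteq> ?I - {a,b,s}"
      using filler[of "{a,b,s}" "p - 4" n] that assms(2,3) cd by fastforce
    have "pc c (0 # a # b # s # F @ [n]) = c0"
      by (rule P) (use F that assms(1-3) in \<open>auto simp: is_0n_p_path_def\<close>)
    moreover have "pc c (0 # b # a # s # F @ [n]) = c0"
      by (rule P) (use F that assms(1-3) in \<open>auto simp: is_0n_p_path_def\<close>)
    ultimately show ?thesis by (simp add: insert_commute)
  qed
  have B: "c {0,a} + c {a,b} = c {0,x} + c {x,b}"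
    if "a \<in> ?I" "b \<in> ?I" "x \<in> ?I" "a \<noteq> b" "a \<noteq> x" "b \<noteq> x" for a b x
  proof -
    have cd: "card {a,b,x} = 3" using that by simp
    obtain F where F: "distinct F" "length F = p - 3" "set F \<subseteq> ?I - {a,b,x}"
      using filler[of "{a,b,x}" "p - 3" n] that assms(2,3) cd by fastforce
    have "pc c (0 # a # b # F @ [n]) = c0"
      by (rule P) (use F that assms(1-3) in \<open>auto simp: is_0n_p_path_def\<close>)
    moreover have "pc c (0 # x # b # F @ [n]) = c0"
      by (rule P) (use F that assms(1-3) in \<open>auto simp: is_0n_p_path_def\<close>)
    ultimately show ?thesis by (simp add: insert_commute)
  qed
  have C: "c {b,a} + c {a,n} = c {b,x} + c {x,n}"
    if "a \<in> ?I" "b \<in> ?I" "x \<in> ?I" "a \<noteq> b" "a \<noteq> x" "b \<noteq> x" for a b x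
  proof -
    have cd: "card {a,b,x} = 3" using that by simp
    obtain F where F: "distinct F" "length F = p - 3" "set F \<subseteq> ?I - {a,b,x}"
      using filler[of "{a,b,x}" "p - 3" n] that assms(2,3) cd by fastforce
    have "pc c ((0 # F) @ b # a # [n]) = c0"
      by (rule P) (use F that assms(1-3) in \<open>auto simp: is_0n_p_path_def\<close>)
    moreover have "pc c ((0 # F) @ b # x # [n]) = c0"
      by (rule P) (use F that assms(1-3) in \<open>auto simp: is_0n_p_path_def\<close>)
    moreover have "pc c ((0 # F) @ [b, a, n]) = pc c ((0 # F) @ [b]) + (c {b,a} + c {a,n})"
      using pc_append[of c "0 # F" b "[a, n]"] by (simp only: pc.simps add_0_right)
    moreover have "pc c ((0 # F) @ [b, x, n]) = pc c ((0 # F) @ [b]) + (c {b,x} + c {x,n})"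
      using pc_append[of c "0 # F" b "[x, n]"] by (simp only: pc.simps add_0_right)
    ultimately show ?thesis by linarith
  qed
  have third: "\<exists>s\<in>?I. s \<noteq> a \<and> s \<noteq> b" for a b
  proof -
    have "\<exists>s::nat. 1 \<le> s \<and> s \<le> 3 \<and> s \<noteq> a \<and> s \<noteq> b" by presburger
    then show ?thesis using assms(1) by force
  qed
  have FH: "c {0,a} = c {0,b} \<and> c {a,s} = c {b,s}"
    if "a \<in> ?I" "b \<in> ?I" "s \<in> ?I" "a \<noteq> b" "a \<noteq> s" "b \<noteq> s" for a b s
    using A[OF that] B[of a s b] that by auto
  have f: "c {0,a} = c {0,b}" if "a \<in> ?I" "b \<in> ?I" for a b
  proof (cases "a = b")
    case False
    obtain s where "s \<in> ?I" "s \<noteq> a" "s \<noteq> b" using third by blast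
    then show ?thesis using FH[of a b s] that False by blast
  qed simp
  have mv: "c {a,s} = c {b,s}" if "a \<in> ?I" "b \<in> ?I" "s \<in> ?I" "a \<noteq> s" "b \<noteq> s" for a b s
    using FH[of a b s] that by (cases "a = b") auto
  have h: "c {i,j} = c {1,2}" if "i \<in> ?I" "j \<in> ?I" "i \<noteq> j" for i j
  proof (cases "j = 2")
    case True
    then show ?thesis using mv[of i 1 2] that assms(1) by auto
  next
    case False
    have "c {i,j} = c {2,j}" using mv[of i 2 j] that assms(1) False by auto
    also have "\<dots> = c {j,2}" by (simp add: insert_commute)
    also have "\<dots> = c {1,2}" using mv[of j 1 2] that assms(1) False by auto
    finally show ?thesis .
  qed
  have g: "c {a,n} = c {1,n}" if "a \<in> ?I" for a
  proof (cases "a = 1")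
    case False
    obtain b where b: "b \<in> ?I" "b \<noteq> a" "b \<noteq> 1" using third by blast
    have "c {b,a} = c {b,1}" using h[of b a] h[of b 1] b that False by auto
    then show ?thesis using C[of a b 1] b that False assms(1) by auto
  qed simp
  show ?thesis
    apply (rule exI[of _ "c {0,1}"], rule exI[of _ "c {1,n}"], rule exI[of _ "c {1,2}"])
  proof (intro conjI ballI impI)
    fix i assume i: "i \<in> ?I"
    have "1 \<in> ?I" using assms(1) by simp
    then show "c {0, i} = c {0, 1}" using f[OF i] by blast
    show "c {i, n} = c {1, n}" using g[OF i] .
  next
    fix i j assume "i \<in> ?I" "j \<in> ?I" "i \<noteq> j"
    then show "c {i, j} = c {1, 2}" by (rule h)
  qed
qed

end
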